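(* Let $(X,d)$ be a sequentially right $K$-complete quasi-pseudometric space and $\varphi:X\to\mathbb{R}\cup\{\infty\}$ a proper, bounded below, nearly lower semicontinuous function. For $x\in X$ let $S(x)=\{y\in X:\varphi(y)+d(y,x)\le\varphi(x)\}$. Then there exists $z\in X$ such that $\varphi(y)=\varphi(z)$ for all $y\in S(z)$. Moreover, for such $z$ and every $y\in S(z)$: (i) $S(y)\subseteq\overline{\{y\}}$, and (ii) $\varphi(y)<\varphi(x)+d(x,y)$ for all $x\in X\setminus S(y)$.
   Context: A quasi-pseudometric on $X$ is $d:X\times X\to[0,\infty)$ with $d(x,x)=0$ and $d(x,z)\le d(x,y)+d(y,z)$ (no symmetry). Topology $\tau_d$: neighbourhood base at $x$ given by $\{y:d(x,y)<r\}$, $r>0$; $x_n\to x$ iff $d(x,x_n)\to0$; $\overline{\{y\}}=\{x:d(x,y)=0\}$. A sequence $(x_n)$ is right $K$-Cauchy if for every $\varepsilon>0$ there is $n_\varepsilon$ with $d(x_{n+k},x_n)<\varepsilon$ for all $n\ge n_\varepsilon$, $k\in\mathbb{N}$; $X$ is sequentially right $K$-complete if every right $K$-Cauchy sequence converges. $\varphi$ proper means $\varphi(x)<\infty$ for some $x$. $\varphi$ is nearly lower semicontinuous if $\varphi(x)\le\liminf_n\varphi(x_n)$ for every sequence with pairwise distinct terms converging to $x$. *)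

theory Defs
  imports "HOL-Analysis.Analysis"
begin

definition quasi_pseudometric :: "('a \<Rightarrow> 'a \<Rightarrow> real) \<Rightarrow> bool" where
  "quasi_pseudometric d \<longleftrightarrow>
     (\<forall>x y. 0 \<le> d x y) \<and> (\<forall>x. d x x = 0) \<and> (\<forall>x y z. d x z \<le> d x y + d y z)"

definition qtop :: "('a \<Rightarrow> 'a \<Rightarrow> real) \<Rightarrow> 'a topology" where
  "qtop d = topology (\<lambda>U. \<forall>x\<in>U. \<exists>r>0. {y. d x y < r} \<subseteq> U)"

definition qconv :: "('a \<Rightarrow> 'a \<Rightarrow> real) \<Rightarrow> (nat \<Rightarrow> 'a) \<Rightarrow> 'a \<Rightarrow> bool" where
  "qconv d xs x \<longleftrightarrow> (\<lambda>n. d x (xs n)) \<longlonglongrightarrow> 0"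

definition right_K_Cauchy :: "('a \<Rightarrow> 'a \<Rightarrow> real) \<Rightarrow> (nat \<Rightarrow> 'a) \<Rightarrow> bool" where
  "right_K_Cauchy d xs \<longleftrightarrow>
     (\<forall>e>0. \<exists>N. \<forall>n\<ge>N. \<forall>k::nat. d (xs (n + k)) (xs n) < e)"

definition seq_right_K_complete :: "('a \<Rightarrow> 'a \<Rightarrow> real) \<Rightarrow> bool" where
  "seq_right_K_complete d \<longleftrightarrow> (\<forall>xs. right_K_Cauchy d xs \<longrightarrow> (\<exists>x. qconv d xs x))"

definition nearly_lsc :: "('a \<Rightarrow> 'a \<Rightarrow> real) \<Rightarrow> ('a \<Rightarrow> ereal) \<Rightarrow> bool" where
  "nearly_lsc d \<phi> \<longleftrightarrow>
     (\<forall>xs x. inj xs \<and> qconv d xs x \<longrightarrow> \<phi> x \<le> liminf (\<lambda>n. \<phi> (xs n)))"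

definition Sset :: "('a \<Rightarrow> 'a \<Rightarrow> real) \<Rightarrow> ('a \<Rightarrow> ereal) \<Rightarrow> 'a \<Rightarrow> 'a set" where
  "Sset d \<phi> x = {y. \<phi> y + ereal (d y x) \<le> \<phi> x}"

end

theory Submission imports Defs begin

lemma qtop_open: "openin (qtop d) U \<longleftrightarrow> (\<forall>x\<in>U. \<exists>r>0. {y. d x y < r} \<subseteq> U)"
proof -
  have "istopology (\<lambda>U. \<forall>x\<in>U. \<exists>r>0. {y. d x y < r} \<subseteq> U)"
    unfolding istopology_def
  proof (intro conjI allI impI)
    fix S T :: "'a set"
    assume a1: "\<forall>x\<in>S. \<exists>r>0. {y. d x y < r} \<subseteq> S" and a2: "\<forall>x\<in>T. \<exists>r>0. {y. d x y < r} \<subseteq> T"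
    show "\<forall>x\<in>S \<inter> T. \<exists>r>0. {y. d x y < r} \<subseteq> S \<inter> T"
    proof
      fix x assume "x \<in> S \<inter> T"
      then obtain r1 r2 where "r1 > 0" "{y. d x y < r1} \<subseteq> S" "r2 > 0" "{y. d x y < r2} \<subseteq> T"
        using a1 a2 by blast
      then show "\<exists>r>0. {y. d x y < r} \<subseteq> S \<inter> T"
        by (intro exI[of _ "min r1 r2"]) auto
    qed
  next
    fix K :: "'a set set"
    assume "\<forall>S\<in>K. \<forall>x\<in>S. \<exists>r>0. {y. d x y < r} \<subseteq> S"
    then show "\<forall>x\<in>\<Union>K. \<exists>r>0. {y. d x y < r} \<subseteq> \<Union>K"
      by (meson Union_upper UnionE order_trans)
  qed
  then show ?thesis unfolding qtop_def by (simp add: topology_inverse')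
qed

lemma qtop_closure:
  assumes "d w y = 0" shows "w \<in> (qtop d) closure_of {y}"
proof -
  have top: "topspace (qtop d) = UNIV"
    proof -
    have "openin (qtop d) UNIV" unfolding qtop_open by (auto intro: exI[of _ 1])
    then show ?thesis by (simp add: topspace_def Sup_upper top_le)
  qed
  show ?thesis unfolding closure_of_def top
  proof (intro CollectI conjI allI impI)
    fix T assume "w \<in> T \<and> openin (qtop d) T"
    then obtain r where "r > 0" "{v. d w v < r} \<subseteq> T" by (auto simp: qtop_open)
    then have "y \<in> T" using assms by auto
    then show "\<exists>v\<in>{y}. v \<in> T" by blast
  qed simp
qed

lemma S_real:
  assumes "\<phi> x = ereal a" "\<phi> y \<noteq> -\<infinity>"
  shows "y \<in> Sset d \<phi> x \<longleftrightarrow> (\<exists>b. \<phi> y = ereal b \<and> b + d y x \<le> a)"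
proof (cases "\<phi> y")
  case (real r)
  have e: "(ereal r + ereal (d y x) \<le> ereal a) = (r + d y x \<le> a)" by simp
  have "y \<in> Sset d \<phi> x \<longleftrightarrow> ereal r + ereal (d y x) \<le> ereal a"
    unfolding Sset_def using real assms(1) by (metis mem_Collect_eq)
  also have "\<dots> \<longleftrightarrow> (\<exists>b. \<phi> y = ereal b \<and> b + d y x \<le> a)" using e real by auto
  finally show ?thesis .
next
  case PInf
  then show ?thesis using assms(1) unfolding Sset_def by simp
next
  case MInf
  then show ?thesis using assms(2) by simp
qed


lemma S_trans:
  assumes dtri: "\<And>x y z. d x z \<le> d x y + d y z" and ninf: "\<forall>x. \<phi> x \<noteq> -\<infinity>"
    and fx: "\<phi> x \<noteq> \<infinity>" and y: "y \<in> Sset d \<phi> x" and w: "w \<in> Sset d \<phi> y"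
  shows "w \<in> Sset d \<phi> x"
proof -
  obtain a where a: "\<phi> x = ereal a" using fx ninf by (cases "\<phi> x") auto
  obtain b where b: "\<phi> y = ereal b" "b + d y x \<le> a" using S_real[of \<phi> x a y d, OF a] ninf y by auto
  obtain e where e: "\<phi> w = ereal e" "e + d w y \<le> b" using S_real[of \<phi> y b w d, OF b(1)] ninf w by auto
  have "e + d w x \<le> a" using dtri[of w x y] b e by linarith
  then show ?thesis using S_real[of \<phi> x a w d, OF a] ninf e by auto
qed

lemma S_self: "d x x = 0 \<Longrightarrow> x \<in> Sset d \<phi> x"
  unfolding Sset_def by simp

lemma S_le:
  assumes "\<forall>x y. 0 \<le> d x y" "y \<in> Sset d \<phi> x" shows "\<phi> y \<le> \<phi> x"
proof -
  have "\<phi> y + ereal 0 \<le> \<phi> y + ereal (d y x)" using assms(1) by (intro add_left_mono) auto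
  then show ?thesis using assms(2) unfolding Sset_def by auto
qed

lemma existence:
  fixes d :: "'a \<Rightarrow> 'a \<Rightarrow> real" and \<phi> :: "'a \<Rightarrow> ereal"
  assumes qp: "quasi_pseudometric d"
    and compl: "seq_right_K_complete d"
    and ninf: "\<forall>x. \<phi> x \<noteq> -\<infinity>"
    and proper: "\<exists>x. \<phi> x < \<infinity>"
    and bdd: "\<exists>c::real. \<forall>x. ereal c \<le> \<phi> x"
    and nlsc: "nearly_lsc d \<phi>"
  shows "\<exists>z. \<forall>y\<in>Sset d \<phi> z. \<phi> y = \<phi> z"
proof (rule ccontr)
  assume "\<not> ?thesis"
  then have H: "\<forall>z. \<exists>y\<in>Sset d \<phi> z. \<phi> y \<noteq> \<phi> z" by blast
  obtain c :: real where c: "\<forall>x. ereal c \<le> \<phi> x" using bdd by blast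
  have dnn: "\<forall>x y. 0 \<le> d x y" and d0: "\<And>x. d x x = 0" and dtri: "\<And>x y z. d x z \<le> d x y + d y z"
    using qp unfolding quasi_pseudometric_def by auto
  have step: "\<exists>y. y \<in> Sset d \<phi> x \<and> \<phi> y < \<phi> x \<and>
      \<phi> y < Inf (\<phi> ` Sset d \<phi> x) + ereal (inverse (real (Suc n)))" for x n
  proof -
    obtain y where y: "y \<in> Sset d \<phi> x" "\<phi> y \<noteq> \<phi> x" using H by blast
    have yx: "\<phi> y < \<phi> x" using S_le[OF dnn y(1)] y(2) by auto
    define I where "I = Inf (\<phi> ` Sset d \<phi> x)"
    have "I \<le> \<phi> y" unfolding I_def using y(1) by (simp add: INF_lower)
    have "ereal c \<le> I" unfolding I_def using c by (simp add: INF_greatest)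
    obtain i where i: "I = ereal i" using \<open>I \<le> \<phi> y\<close> yx \<open>ereal c \<le> I\<close>
      by (cases I) auto
    have pos: "0 < inverse (real (Suc n))" by simp
    have "I < min (\<phi> x) (I + ereal (inverse (real (Suc n))))"
      using \<open>I \<le> \<phi> y\<close> yx i pos by auto
    then obtain y' where "y' \<in> Sset d \<phi> x" "\<phi> y' < min (\<phi> x) (I + ereal (inverse (real (Suc n))))"
      unfolding I_def by (meson INF_less_iff)
    then show ?thesis unfolding I_def by auto
  qed
  define nx where "nx x n = (SOME y. y \<in> Sset d \<phi> x \<and> \<phi> y < \<phi> x \<and>
      \<phi> y < Inf (\<phi> ` Sset d \<phi> x) + ereal (inverse (real (Suc n))))" for x n
  have nx: "nx x n \<in> Sset d \<phi> x \<and> \<phi> (nx x n) < \<phi> x \<and>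
      \<phi> (nx x n) < Inf (\<phi> ` Sset d \<phi> x) + ereal (inverse (real (Suc n)))" for x n
    unfolding nx_def by (rule someI_ex[OF step])
  obtain x0 where x0: "\<phi> x0 < \<infinity>" using proper by blast
  define xs where "xs = rec_nat x0 (\<lambda>n x. nx x n)"
  have xs0: "xs 0 = x0" and xsS: "xs (Suc n) = nx (xs n) n" for n unfolding xs_def by simp_all
  have fin: "\<phi> (xs n) \<noteq> \<infinity>" for n
  proof (induction n)
    case 0 then show ?case using x0 xs0 by auto
  next
    case (Suc n) then show ?case using nx[of "xs n" n] xsS[of n] by auto
  qed
  define f where "f n = real_of_ereal (\<phi> (xs n))" for n
  have fe: "\<phi> (xs n) = ereal (f n)" for n
    unfolding f_def using fin[of n] ninf by (cases "\<phi> (xs n)") auto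
  have fdec: "f (Suc n) < f n" for n using nx[of "xs n" n] xsS[of n] fe[of n] fe[of "Suc n"] by auto
  have fc: "c \<le> f n" for n using c fe[of n] by (metis ereal_less_eq(3))
  have inS: "xs (n + k) \<in> Sset d \<phi> (xs n)" for n k
  proof (induction k)
    case 0 then show ?case using S_self[of d] d0 by simp
  next
    case (Suc k)
    have "xs (Suc (n + k)) \<in> Sset d \<phi> (xs (n + k))" using nx xsS by simp
    then show ?case using S_trans[OF dtri ninf fin Suc] by simp
  qed
  have dle: "d (xs (n + k)) (xs n) \<le> f n - f (n + k)" for n k
    using S_real[of \<phi> "xs n" "f n" "xs (n+k)" d, OF fe[of n]] inS[of n k] fe[of "n+k"] ninf by auto
  have fsmono: "m < n \<Longrightarrow> f n < f m" for m n
  proof (induction n)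
    case 0 then show ?case by simp
  next
    case (Suc n) then show ?case using fdec[of n] by (cases "m = n") auto
  qed
  have "antimono_on UNIV f" using fdec by (intro decseq_SucI) (simp add: less_imp_le)
  then obtain L where L: "f \<longlonglongrightarrow> L" "\<forall>i. L \<le> f i" using decseq_convergent[OF \<open>antimono_on UNIV f\<close>, of c] fc by blast
  have cauchy: "right_K_Cauchy d xs"
    unfolding right_K_Cauchy_def
  proof (intro allI impI)
    fix e :: real assume "e > 0"
    then obtain N where N: "\<forall>n\<ge>N. dist (f n) L < e" using L(1) LIMSEQ_iff_nz
      by (metis dist_real_def lim_sequentially)
    show "\<exists>N. \<forall>n\<ge>N. \<forall>k. d (xs (n + k)) (xs n) < e"
    proof (intro exI allI impI)
      fix n k assume "N \<le> n"
      then have "f n - L < e" using N by (auto simp: dist_real_def)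
      then show "d (xs (n + k)) (xs n) < e" using dle[of n k] L(2)[rule_format, of "n+k"] by linarith
    qed
  qed
  obtain z where z: "qconv d xs z" using compl cauchy unfolding seq_right_K_complete_def by blast
  have dz: "(\<lambda>n. d z (xs n)) \<longlonglongrightarrow> 0" using z unfolding qconv_def .
  have injx: "inj xs"
  proof (rule injI)
    fix m n assume "xs m = xs n"
    then have "f m = f n" unfolding f_def by simp
    then show "m = n" using fsmono by (metis less_irrefl linorder_neqE_nat)
  qed
  have "\<phi> z \<le> liminf (\<lambda>n. \<phi> (xs n))" using nlsc injx z unfolding nearly_lsc_def by blast
  also have "liminf (\<lambda>n. \<phi> (xs n)) = ereal L"
    unfolding fe by (rule lim_imp_Liminf) (auto intro: tendsto_ereal L(1))
  finally have zL: "\<phi> z \<le> ereal L" .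
  obtain b where b: "\<phi> z = ereal b" using zL ninf by (cases "\<phi> z") auto
  have bL: "b \<le> L" using zL b by simp
  have zS: "z \<in> Sset d \<phi> (xs n)" for n
  proof -
    have lim: "(\<lambda>m. d z (xs m) + (f n - f m)) \<longlonglongrightarrow> 0 + (f n - L)"
      by (intro tendsto_intros dz L(1))
    have "d z (xs n) \<le> 0 + (f n - L)"
    proof (rule LIMSEQ_le_const[OF lim], intro exI allI impI)
      fix m assume "n \<le> m"
      then obtain k where "m = n + k" using le_Suc_ex by blast
      then show "d z (xs n) \<le> d z (xs m) + (f n - f m)"
        using dtri[of z "xs n" "xs m"] dle[of n k] by simp
    qed
    then have "b + d z (xs n) \<le> f n" using bL by simp
    then show ?thesis using S_real[of \<phi> "xs n" "f n" z d, OF fe[of n]] b ninf by auto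
  qed
  obtain y where y: "y \<in> Sset d \<phi> z" "\<phi> y \<noteq> \<phi> z" using H by blast
  obtain a where a: "\<phi> y = ereal a" "a + d y z \<le> b" using S_real[of \<phi> z b y d, OF b] y(1) ninf by auto
  have ab: "a \<le> b" using a(2) dnn[rule_format, of y z] by linarith
  have yS: "y \<in> Sset d \<phi> (xs n)" for n using S_trans[OF dtri ninf fin zS y(1)] .
  have "L < a + inverse (real (Suc n))" for n
  proof -
    have "ereal (f (Suc n)) < Inf (\<phi> ` Sset d \<phi> (xs n)) + ereal (inverse (real (Suc n)))"
      using nx[of "xs n" n] xsS[of n] fe[of "Suc n"] by simp
    also have "\<dots> \<le> ereal a + ereal (inverse (real (Suc n)))"
      using yS[of n] a(1) by (intro add_right_mono) (metis INF_lower)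
    finally have "f (Suc n) < a + inverse (real (Suc n))" by simp
    then show ?thesis using L(2)[rule_format, of "Suc n"] by linarith
  qed
  note Lb = this
  have "L \<le> a"
  proof (rule ccontr)
    assume "\<not> L \<le> a"
    then have "0 < L - a" by simp
    then obtain n where n: "n > 0" "inverse (real n) < L - a" using ex_inverse_of_nat_less by blast
    then obtain m where "n = Suc m" using gr0_implies_Suc by blast
    then show False using n(2) Lb[of m] by simp
  qed
  then have "a = b" using ab bL by simp
  then show False using y(2) a(1) b by simp
qed


theorem theorem3p2:
  fixes d :: "'a \<Rightarrow> 'a \<Rightarrow> real" and \<phi> :: "'a \<Rightarrow> ereal"
  assumes "quasi_pseudometric d"
    and "seq_right_K_complete d"
    and "\<forall>x. \<phi> x \<noteq> -\<infinity>"
    and "\<exists>x. \<phi> x < \<infinity>"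
    and "\<exists>c::real. \<forall>x. ereal c \<le> \<phi> x"
    and "nearly_lsc d \<phi>"
  shows "(\<exists>z. \<forall>y\<in>Sset d \<phi> z. \<phi> y = \<phi> z)
    \<and> (\<forall>z. (\<forall>y\<in>Sset d \<phi> z. \<phi> y = \<phi> z) \<longrightarrow>
          (\<forall>y\<in>Sset d \<phi> z.
              Sset d \<phi> y \<subseteq> (qtop d) closure_of {y}
            \<and> (\<forall>x. x \<notin> Sset d \<phi> y \<longrightarrow> \<phi> y < \<phi> x + ereal (d x y))))"
proof (intro conjI allI impI ballI)
  show "\<exists>z. \<forall>y\<in>Sset d \<phi> z. \<phi> y = \<phi> z" using existence[OF assms] .
next
  fix z y x
  assume "\<forall>y\<in>Sset d \<phi> z. \<phi> y = \<phi> z" "y \<in> Sset d \<phi> z" "x \<notin> Sset d \<phi> y"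
  then show "\<phi> y < \<phi> x + ereal (d x y)" unfolding Sset_def by auto
next
  fix z y
  assume Z: "\<forall>y\<in>Sset d \<phi> z. \<phi> y = \<phi> z" and y: "y \<in> Sset d \<phi> z"
  have ninf: "\<forall>x. \<phi> x \<noteq> -\<infinity>" using assms(3) .
  have dnn: "\<forall>x y. 0 \<le> d x y" and d0: "\<And>x. d x x = 0" and dtri: "\<And>x y z. d x z \<le> d x y + d y z"
    using assms(1) unfolding quasi_pseudometric_def by auto
  have zfin: "\<phi> z \<noteq> \<infinity>"
  proof
    assume zi: "\<phi> z = \<infinity>"
    obtain x0 where x0: "\<phi> x0 < \<infinity>" using assms(4) by blast
    have "x0 \<in> Sset d \<phi> z" unfolding Sset_def using zi by simp
    then show False using Z zi x0 by auto
  qed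
  obtain b where b: "\<phi> z = ereal b" using zfin ninf by (cases "\<phi> z") auto
  have yb: "\<phi> y = ereal b" using Z y b by auto
  show "Sset d \<phi> y \<subseteq> qtop d closure_of {y}"
  proof
    fix w assume w: "w \<in> Sset d \<phi> y"
    have "w \<in> Sset d \<phi> z" using S_trans[OF dtri ninf zfin y w] .
    then have wb: "\<phi> w = ereal b" using Z b by auto
    have "b + d w y \<le> b" using S_real[of \<phi> y b w d, OF yb] w ninf wb by auto
    then have "d w y = 0" using dnn[rule_format, of w y] by linarith
    then show "w \<in> qtop d closure_of {y}" by (rule qtop_closure)
  qed
qed

end
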